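(* Let $G$ be a finite group, let $\varphi: G\to \mathcal{U}(d)$ be a (non-projective) unitary representation, and let $\ket{\Psi_1},\dots,\ket{\Psi_n}\in\mathbb{C}^d$ be nonzero vectors such that the rank-one operators $A_k=\ket{\Psi_k}\bra{\Psi_k}$ are pairwise distinct, satisfy $\sum_{k=1}^n A_k=\mathbb{1}_d$, and satisfy $\varphi(g)A_k\varphi(g)^\dagger\in\{A_1,\dots,A_n\}$ for all $g\in G$ and all $k$. Let $M=(\ket{\Psi_1}\,\cdots\,\ket{\Psi_n})\in\mathbb{C}^{d\times n}$ be the matrix with columns $\ket{\Psi_k}$. Then there exist a homomorphism $\pi: G\to \mathcal{S}_n$ and a unitary representation $\varphi_{\rm mon}: G\to\mathcal{U}(n)$ all of whose images are monomial matrices, with $\varphi_{\rm mon}(g)e_k = e^{i\phi(g,k)}e_{\pi(g)k}$ for some real phases $\phi(g,k)$, such that $\varphi(g)M = M\varphi_{\rm mon}(g)$ for all $g\in G$.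
   Context: $\mathcal{U}(n)$ is the group of unitary $n\times n$ matrices, $\mathcal{S}_n$ the symmetric group on $n$ symbols, $e_1,\dots,e_n$ the standard basis of $\mathbb{C}^n$. A monomial matrix is a matrix with exactly one nonzero entry in each row and each column. *)

theory Defs
  imports "HOL-Analysis.Analysis" "HOL-Algebra.Group"
begin

definition cadjoint :: "complex^'m^'n \<Rightarrow> complex^'n^'m" where
  "cadjoint A = (\<chi> i j. cnj (A $ j $ i))"

definition unitary_mat :: "complex^'n^'n \<Rightarrow> bool" where
  "unitary_mat U \<longleftrightarrow> U ** cadjoint U = mat 1 \<and> cadjoint U ** U = mat 1"

definition ketbra :: "complex^'n \<Rightarrow> complex^'n^'n" where
  "ketbra v = (\<chi> i j. v $ i * cnj (v $ j))"

definition unitary_rep :: "('g, 'b) monoid_scheme \<Rightarrow> ('g \<Rightarrow> complex^'n^'n) \<Rightarrow> bool" where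
  "unitary_rep G \<phi> \<longleftrightarrow>
     (\<forall>g\<in>carrier G. unitary_mat (\<phi> g)) \<and>
     (\<forall>g\<in>carrier G. \<forall>h\<in>carrier G. \<phi> (g \<otimes>\<^bsub>G\<^esub> h) = \<phi> g ** \<phi> h)"

definition monomial_mat :: "complex^'n^'n \<Rightarrow> bool" where
  "monomial_mat A \<longleftrightarrow> (\<forall>i. \<exists>!j. A $ i $ j \<noteq> 0) \<and> (\<forall>j. \<exists>!i. A $ i $ j \<noteq> 0)"

end

theory Submission
  imports Defs
begin
lemma conj_ketbra: "A ** ketbra v ** cadjoint A = ketbra (A *v v)"
  by (simp add: vec_eq_iff matrix_matrix_mult_def matrix_vector_mult_def ketbra_def
      cadjoint_def sum_distrib_left sum_distrib_right cnj_sum mult_ac)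

lemma ketbra_scale: "cmod c = 1 \<Longrightarrow> ketbra (c *s v) = ketbra v"
proof -
  assume "cmod c = 1"
  then have "c * cnj c = 1" by (metis complex_norm_square of_real_1 power_one)
  then show ?thesis
    by (simp add: vec_eq_iff ketbra_def)
qed

lemma ketbra_eq:
  assumes "ketbra v = ketbra w" "w \<noteq> 0"
  shows "\<exists>c. cmod c = 1 \<and> v = c *s w"
proof -
  obtain j where j: "w $ j \<noteq> 0" using assms(2) by (metis vec_eq_iff zero_index)
  have e: "\<And>i l. v $ i * cnj (v $ l) = w $ i * cnj (w $ l)"
    using assms(1) by (metis (no_types, lifting) ketbra_def vec_lambda_beta)
  have jj: "v $ j * cnj (v $ j) = w $ j * cnj (w $ j)" using e by blast
  then have n: "cmod (v $ j) ^ 2 = cmod (w $ j) ^ 2"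
    by (metis complex_norm_square of_real_eq_iff of_real_power)
  then have vj: "v $ j \<noteq> 0" using j by auto
  define c where "c = cnj (w $ j) / cnj (v $ j)"
  have "cmod c = 1" using n vj j unfolding c_def
    by (simp add: norm_divide)
  moreover have "v = c *s w"
  proof (simp add: vec_eq_iff, intro allI)
    fix i
    have "v $ i * cnj (v $ j) = w $ i * cnj (w $ j)" using e by blast
    then show "v $ i = c * w $ i" unfolding c_def using vj
      by (simp add: field_simps)
  qed
  ultimately show ?thesis by blast
qed

lemma unitary_cancel: "unitary_mat U \<Longrightarrow> cadjoint U *v (U *v v) = v"
  by (simp add: unitary_mat_def matrix_vector_mul_assoc)

lemma unitary_conj_cancel:
  "unitary_mat U \<Longrightarrow> cadjoint U ** (U ** K ** cadjoint U) ** U = K"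
  by (simp add: unitary_mat_def matrix_mul_assoc matrix_mul_lid matrix_mul_rid)
     (metis matrix_mul_assoc matrix_mul_lid matrix_mul_rid)

lemma mono_hom:
  fixes p q :: "'n::finite \<Rightarrow> 'n" and a b :: "'n \<Rightarrow> complex"
  shows "(\<chi> i k. if i = p k then a k else 0) ** (\<chi> i k. if i = q k then b k else 0)
     = (\<chi> i k. if i = p (q k) then a (q k) * b k else 0)"
proof -
  have "\<And>i k. (\<Sum>j\<in>UNIV. (if i = p j then a j else 0) * (if j = q k then b k else 0))
      = (if i = p (q k) then a (q k) * b k else 0)"
  proof -
    fix i k
    have "(\<Sum>j\<in>UNIV. (if i = p j then a j else 0) * (if j = q k then b k else 0))
       = (\<Sum>j\<in>UNIV. if j = q k then (if i = p j then a j else 0) * b k else 0)"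
      by (rule sum.cong) auto
    also have "\<dots> = (if i = p (q k) then a (q k) * b k else 0)" by simp
    finally show "?thesis i k" .
  qed
  then show ?thesis by (simp add: vec_eq_iff matrix_matrix_mult_def)
qed

lemma mono_unitary:
  fixes p :: "'n::finite \<Rightarrow> 'n" and a :: "'n \<Rightarrow> complex"
  assumes "bij p" "\<And>k. cmod (a k) = 1"
  shows "unitary_mat (\<chi> i k. if i = p k then a k else 0)"
proof -
  have ac: "\<And>k. a k * cnj (a k) = 1" using assms(2)
    by (metis complex_norm_square of_real_1 power_one)
  have ac2: "\<And>k. cnj (a k) * a k = 1" using ac by (simp add: mult.commute)
  have ip: "\<And>i k. (i = p k) = (k = inv_into UNIV p i)" using assms(1) by (metis bij_inv_eq_iff)
  have injp: "\<And>k l. (p k = p l) = (k = l)" using assms(1) by (metis bij_def inj_eq)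
  have 1: "\<And>i j. (\<Sum>k\<in>UNIV. (if i = p k then a k else 0) * cnj (if j = p k then a k else 0))
     = (if i = j then 1 else 0)"
  proof -
    fix i j
    have "(\<Sum>k\<in>UNIV. (if i = p k then a k else 0) * cnj (if j = p k then a k else 0))
       = (\<Sum>k\<in>UNIV. if k = inv_into UNIV p i then (if j = p k then a k * cnj (a k) else 0) else 0)"
      by (rule sum.cong) (auto simp: ip)
    also have "\<dots> = (if j = p (inv_into UNIV p i) then a (inv_into UNIV p i) * cnj (a (inv_into UNIV p i)) else 0)"
      by simp
    also have "\<dots> = (if i = j then 1 else 0)" using ac assms(1)
      by (auto simp: bij_is_surj surj_f_inv_f)
    finally show "?thesis i j" .
  qed
  have 2: "\<And>i j. (\<Sum>k\<in>UNIV. cnj (if k = p i then a i else 0) * (if k = p j then a j else 0))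
     = (if i = j then 1 else 0)"
  proof -
    fix i j
    have "(\<Sum>k\<in>UNIV. cnj (if k = p i then a i else 0) * (if k = p j then a j else 0))
       = (\<Sum>k\<in>UNIV. if k = p i then cnj (a i) * (if k = p j then a j else 0) else 0)"
      by (rule sum.cong) auto
    also have "\<dots> = (if i = j then 1 else 0)" using ac2 by (auto simp: injp)
    finally show "?thesis i j" .
  qed
  show ?thesis
    unfolding unitary_mat_def
    using 1 2 by (simp add: vec_eq_iff matrix_matrix_mult_def cadjoint_def mat_def)
qed

lemma scale_uniq:
  fixes \<Psi> :: "'n::finite \<Rightarrow> complex^'d::finite"
  assumes "inj (\<lambda>k. ketbra (\<Psi> k))" "\<And>k. \<Psi> k \<noteq> 0"
    and "c *s \<Psi> l = c' *s \<Psi> l'" "cmod c = 1" "cmod c' = 1"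
  shows "l = l' \<and> c = c'"
proof -
  have "ketbra (\<Psi> l) = ketbra (\<Psi> l')"
    using ketbra_scale[OF assms(4), of "\<Psi> l"] ketbra_scale[OF assms(5), of "\<Psi> l'"] assms(3) by simp
  then have ll: "l = l'" using assms(1) by (meson injD)
  obtain j where j: "\<Psi> l $ j \<noteq> 0" using assms(2)[of l] by (metis vec_eq_iff zero_index)
  have "c * \<Psi> l $ j = c' * \<Psi> l $ j" using assms(3) ll by (metis vector_smult_component)
  then have "c = c'" using j by simp
  with ll show ?thesis by simp
qed

theorem mainTheorem2:
  fixes G :: "('g, 'b) monoid_scheme"
    and \<phi> :: "'g \<Rightarrow> complex^'d^'d"
    and \<Psi> :: "'n::finite \<Rightarrow> complex^'d::finite"
  assumes "group G" and "finite (carrier G)"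
    and "unitary_rep G \<phi>"
    and "\<And>k. \<Psi> k \<noteq> 0"
    and "inj (\<lambda>k. ketbra (\<Psi> k))"
    and "(\<Sum>k\<in>UNIV. ketbra (\<Psi> k)) = mat 1"
    and "\<And>g k. g \<in> carrier G \<Longrightarrow>
           \<phi> g ** ketbra (\<Psi> k) ** cadjoint (\<phi> g) \<in> range (\<lambda>l. ketbra (\<Psi> l))"
  shows "\<exists>(\<pi> :: 'g \<Rightarrow> 'n \<Rightarrow> 'n) (\<phi>mon :: 'g \<Rightarrow> complex^'n^'n) (phase :: 'g \<Rightarrow> 'n \<Rightarrow> real).
           (\<forall>g\<in>carrier G. \<pi> g permutes (UNIV :: 'n set)) \<and>
           (\<forall>g\<in>carrier G. \<forall>h\<in>carrier G. \<pi> (g \<otimes>\<^bsub>G\<^esub> h) = \<pi> g \<circ> \<pi> h) \<and>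
           unitary_rep G \<phi>mon \<and>
           (\<forall>g\<in>carrier G. monomial_mat (\<phi>mon g)) \<and>
           (\<forall>g\<in>carrier G. \<forall>k. \<phi>mon g *v axis k 1 = axis (\<pi> g k) (exp (\<i> * of_real (phase g k)))) \<and>
           (\<forall>g\<in>carrier G. \<phi> g ** (\<chi> i k. \<Psi> k $ i) = (\<chi> i k. \<Psi> k $ i) ** \<phi>mon g)"
proof -
  have U: "\<And>g. g \<in> carrier G \<Longrightarrow> unitary_mat (\<phi> g)"
    using assms(3) unfolding unitary_rep_def by blast
  have hom: "\<And>g h. g \<in> carrier G \<Longrightarrow> h \<in> carrier G \<Longrightarrow> \<phi> (g \<otimes>\<^bsub>G\<^esub> h) = \<phi> g ** \<phi> h"
    using assms(3) unfolding unitary_rep_def by blast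
  have ex: "\<exists>p. cmod (snd p) = 1 \<and> \<phi> g *v \<Psi> k = snd p *s \<Psi> (fst p)"
    if g: "g \<in> carrier G" for g k
  proof -
    obtain l where "\<phi> g ** ketbra (\<Psi> k) ** cadjoint (\<phi> g) = ketbra (\<Psi> l)"
      using assms(7)[OF g, of k] by blast
    then have "ketbra (\<phi> g *v \<Psi> k) = ketbra (\<Psi> l)" by (simp add: conj_ketbra)
    then obtain c where "cmod c = 1" "\<phi> g *v \<Psi> k = c *s \<Psi> l"
      using ketbra_eq assms(4) by blast
    then show ?thesis by (intro exI[of _ "(l, c)"]) simp
  qed
  define P where "P g k = (SOME p. cmod (snd p) = 1 \<and> \<phi> g *v \<Psi> k = snd p *s \<Psi> (fst p))" for g k
  define \<pi> where "\<pi> g k = fst (P g k)" for g k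
  define ph where "ph g k = snd (P g k)" for g k
  have Ps: "cmod (ph g k) = 1 \<and> \<phi> g *v \<Psi> k = ph g k *s \<Psi> (\<pi> g k)"
    if g: "g \<in> carrier G" for g k
    unfolding \<pi>_def ph_def P_def using someI_ex[OF ex[OF g, of k]] .
  have inj\<pi>: "inj (\<pi> g)" if g: "g \<in> carrier G" for g
  proof (rule injI)
    fix k k' assume e: "\<pi> g k = \<pi> g k'"
    have "ketbra (\<phi> g *v \<Psi> k) = ketbra (\<phi> g *v \<Psi> k')"
      using Ps[OF g, of k] Ps[OF g, of k'] e ketbra_scale by metis
    then have "\<phi> g ** ketbra (\<Psi> k) ** cadjoint (\<phi> g) = \<phi> g ** ketbra (\<Psi> k') ** cadjoint (\<phi> g)"
      by (simp add: conj_ketbra)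
    then have "ketbra (\<Psi> k) = ketbra (\<Psi> k')"
      using unitary_conj_cancel[OF U[OF g]] by metis
    then show "k = k'" using assms(5) by (meson injD)
  qed
  have perm: "\<pi> g permutes UNIV" if g: "g \<in> carrier G" for g
    by (rule inj_imp_permutes) (use inj\<pi>[OF g] in auto)
  have bij\<pi>: "bij (\<pi> g)" if g: "g \<in> carrier G" for g
    using perm[OF g] permutes_bij by blast
  have homs: "\<pi> (g \<otimes>\<^bsub>G\<^esub> h) k = \<pi> g (\<pi> h k) \<and> ph (g \<otimes>\<^bsub>G\<^esub> h) k = ph g (\<pi> h k) * ph h k"
    if g: "g \<in> carrier G" and h: "h \<in> carrier G" for g h k
  proof -
    have gh: "g \<otimes>\<^bsub>G\<^esub> h \<in> carrier G" using g h assms(1) by (simp add: group.is_monoid monoid.m_closed)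
    have "\<phi> (g \<otimes>\<^bsub>G\<^esub> h) *v \<Psi> k = \<phi> g *v (\<phi> h *v \<Psi> k)"
      by (simp add: hom[OF g h] matrix_vector_mul_assoc)
    also have "\<dots> = (ph g (\<pi> h k) * ph h k) *s \<Psi> (\<pi> g (\<pi> h k))"
      using Ps[OF h, of k] Ps[OF g, of "\<pi> h k"] by (simp add: vector_scalar_commute mult.commute)
    finally have "ph (g \<otimes>\<^bsub>G\<^esub> h) k *s \<Psi> (\<pi> (g \<otimes>\<^bsub>G\<^esub> h) k) = (ph g (\<pi> h k) * ph h k) *s \<Psi> (\<pi> g (\<pi> h k))"
      using Ps[OF gh, of k] by simp
    moreover have "cmod (ph g (\<pi> h k) * ph h k) = 1"
      using Ps[OF h, of k] Ps[OF g, of "\<pi> h k"] by (simp add: norm_mult)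
    ultimately show ?thesis
      using scale_uniq[OF assms(5) assms(4)] Ps[OF gh, of k] by metis
  qed
  define D where "D g = (\<chi> i k. if i = \<pi> g k then ph g k else 0)" for g
  define phase where "phase g k = Arg (ph g k)" for g k
  have "(\<forall>g\<in>carrier G. \<pi> g permutes (UNIV :: 'n set))" using perm by blast
  moreover have "\<forall>g\<in>carrier G. \<forall>h\<in>carrier G. \<pi> (g \<otimes>\<^bsub>G\<^esub> h) = \<pi> g \<circ> \<pi> h"
    using homs by auto
  moreover have "unitary_rep G D"
    unfolding unitary_rep_def
  proof (intro conjI ballI)
    fix g assume g: "g \<in> carrier G"
    show "unitary_mat (D g)" unfolding D_def
      by (rule mono_unitary) (use bij\<pi>[OF g] Ps[OF g] in auto)
  next
    fix g h assume g: "g \<in> carrier G" and h: "h \<in> carrier G"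
    show "D (g \<otimes>\<^bsub>G\<^esub> h) = D g ** D h"
      unfolding D_def mono_hom by (simp add: vec_eq_iff homs[OF g h])
  qed
  moreover have "\<forall>g\<in>carrier G. monomial_mat (D g)"
  proof
    fix g assume g: "g \<in> carrier G"
    have nz: "\<And>k. ph g k \<noteq> 0" using Ps[OF g] by (metis norm_zero zero_neq_one)
    have s: "\<And>i. \<pi> g (inv_into UNIV (\<pi> g) i) = i"
      using bij\<pi>[OF g] by (simp add: bij_is_surj surj_f_inv_f)
    have s2: "\<And>j. inv_into UNIV (\<pi> g) (\<pi> g j) = j"
      using inj\<pi>[OF g] by (simp add: inv_f_f)
    have ij: "\<And>i j. (i = \<pi> g j) = (j = inv_into UNIV (\<pi> g) i)"
      using bij\<pi>[OF g] by (metis bij_inv_eq_iff)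
    show "monomial_mat (D g)"
      unfolding monomial_mat_def D_def using nz
      apply (auto simp: ij)
       apply (metis s2)
      apply (metis s)
      done
  qed
  moreover have "\<forall>g\<in>carrier G. \<forall>k. D g *v axis k 1 = axis (\<pi> g k) (exp (\<i> * of_real (phase g k)))"
  proof (intro ballI allI)
    fix g k assume g: "g \<in> carrier G"
    have e: "exp (\<i> * of_real (phase g k)) = ph g k"
      unfolding phase_def using Ps[OF g, of k] complex_norm_eq_1_exp_eq by blast
    have "\<And>i. (\<Sum>j\<in>UNIV. (if i = \<pi> g j then ph g j else 0) * (if j = k then 1 else 0))
       = (if i = \<pi> g k then ph g k else 0)"
    proof -
      fix i
      have "(\<Sum>j\<in>UNIV. (if i = \<pi> g j then ph g j else 0) * (if j = k then 1 else 0))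
        = (\<Sum>j\<in>UNIV. if j = k then (if i = \<pi> g j then ph g j else 0) else 0)"
        by (rule sum.cong) auto
      then show "?thesis i" by simp
    qed
    then show "D g *v axis k 1 = axis (\<pi> g k) (exp (\<i> * of_real (phase g k)))"
      unfolding e D_def by (simp add: vec_eq_iff matrix_vector_mult_def axis_def)
  qed
  moreover have "\<forall>g\<in>carrier G. \<phi> g ** (\<chi> i k. \<Psi> k $ i) = (\<chi> i k. \<Psi> k $ i) ** D g"
  proof
    fix g assume g: "g \<in> carrier G"
    have l: "(\<Sum>j\<in>UNIV. \<phi> g $ i $ j * \<Psi> k $ j) = ph g k * \<Psi> (\<pi> g k) $ i" for i k
    proof -
      have "(\<phi> g *v \<Psi> k) $ i = (ph g k *s \<Psi> (\<pi> g k)) $ i" using Ps[OF g, of k] by simp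
      then show ?thesis by (simp add: matrix_vector_mult_def)
    qed
    have r: "(\<Sum>j\<in>UNIV. \<Psi> j $ i * (if j = \<pi> g k then ph g k else 0)) = ph g k * \<Psi> (\<pi> g k) $ i" for i k
    proof -
      have "(\<Sum>j\<in>UNIV. \<Psi> j $ i * (if j = \<pi> g k then ph g k else 0))
        = (\<Sum>j\<in>UNIV. if j = \<pi> g k then \<Psi> j $ i * ph g k else 0)"
        by (rule sum.cong) auto
      then show ?thesis by (simp add: mult.commute)
    qed
    show "\<phi> g ** (\<chi> i k. \<Psi> k $ i) = (\<chi> i k. \<Psi> k $ i) ** D g"
      unfolding D_def by (simp add: vec_eq_iff matrix_matrix_mult_def l r)
  qed
  ultimately show ?thesis by blast
qed

end
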